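(* For every $A\in\Theta^\pm_\triangle(n)$, the set $\{B\in\Theta^\pm_\triangle(n):B\prec A\}$ is finite. Hence, for every $A'\in\widetilde\Theta_\triangle(n)$, the interval $(-\infty,A']=\{B\in\widetilde\Theta_\triangle(n):B\sqsubseteq A'\}$ is finite.
   Context: $n\ge2$. $\widetilde\Theta_\triangle(n)$ is the set of matrices $A=(a_{i,j})_{i,j\in\mathbb Z}$ with integer entries, $a_{i,j}\ge0$ for $i\ne j$, $a_{i+n,j+n}=a_{i,j}$ for all $i,j$, and such that each row and each column has finitely many nonzero entries; $\Theta^\pm_\triangle(n)$ is the set of such matrices with nonnegative entries and zero diagonal. $\mathrm{ro}(A)=(\sum_ja_{i,j})_{i\in\mathbb Z}$, $\mathrm{co}(A)=(\sum_ia_{i,j})_{j\in\mathbb Z}$. For $i\ne j$ let $\sigma_{i,j}(A)=\sum_{s\le i,t\ge j}a_{s,t}$ if $i<j$ and $\sigma_{i,j}(A)=\sum_{s\ge i,t\le j}a_{s,t}$ if $i>j$. $B\preccurlyeq A$ iff $\sigma_{i,j}(B)\le\sigma_{i,j}(A)$ for all $i\ne j$; $B\prec A$ iff $B\preccurlyeq A$ and $\sigma_{i,j}(B)<\sigma_{i,j}(A)$ for some $i\ne j$; $B\sqsubseteq A$ iff $B\preccurlyeq A$, $\mathrm{ro}(B)=\mathrm{ro}(A)$ and $\mathrm{co}(B)=\mathrm{co}(A)$. *)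

theory Defs
  imports Main
begin

type_synonym zmat = "int \<Rightarrow> int \<Rightarrow> int"

definition Theta_tilde :: "int \<Rightarrow> zmat set" where
  "Theta_tilde n = {A. (\<forall>i j. i \<noteq> j \<longrightarrow> 0 \<le> A i j)
     \<and> (\<forall>i j. A (i + n) (j + n) = A i j)
     \<and> (\<forall>i. finite {j. A i j \<noteq> 0})
     \<and> (\<forall>j. finite {i. A i j \<noteq> 0})}"

definition Theta_pm :: "int \<Rightarrow> zmat set" where
  "Theta_pm n = {A \<in> Theta_tilde n. (\<forall>i j. 0 \<le> A i j) \<and> (\<forall>i. A i i = 0)}"

definition ro :: "zmat \<Rightarrow> int \<Rightarrow> int" where
  "ro A i = (\<Sum>j\<in>{j. A i j \<noteq> 0}. A i j)"

definition co :: "zmat \<Rightarrow> int \<Rightarrow> int" where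
  "co A j = (\<Sum>i\<in>{i. A i j \<noteq> 0}. A i j)"

definition sigma :: "int \<Rightarrow> int \<Rightarrow> zmat \<Rightarrow> int" where
  "sigma i j A =
     (if i < j then (\<Sum>(s,t)\<in>{(s,t). s \<le> i \<and> j \<le> t \<and> A s t \<noteq> 0}. A s t)
      else (\<Sum>(s,t)\<in>{(s,t). i \<le> s \<and> t \<le> j \<and> A s t \<noteq> 0}. A s t))"

definition preceq :: "zmat \<Rightarrow> zmat \<Rightarrow> bool" where
  "preceq B A \<longleftrightarrow> (\<forall>i j. i \<noteq> j \<longrightarrow> sigma i j B \<le> sigma i j A)"

definition prec :: "zmat \<Rightarrow> zmat \<Rightarrow> bool" where
  "prec B A \<longleftrightarrow> preceq B A \<and> (\<exists>i j. i \<noteq> j \<and> sigma i j B < sigma i j A)"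

definition sqsubseteq :: "zmat \<Rightarrow> zmat \<Rightarrow> bool" where
  "sqsubseteq B A \<longleftrightarrow> preceq B A \<and> ro B = ro A \<and> co B = co A"

end

theory Submission
  imports Defs "HOL-Library.FuncSet"
begin
lemma period_nat:
  assumes "A \<in> Theta_tilde n"
  shows "A (i + int m * n) (j + int m * n) = A i j"
proof (induction m)
  case 0 then show ?case by simp
next
  case (Suc m)
  have p: "\<And>a b. A (a + n) (b + n) = A a b" using assms by (simp add: Theta_tilde_def)
  have "A (i + int (Suc m) * n) (j + int (Suc m) * n) = A ((i + int m * n) + n) ((j + int m * n) + n)"
    by (simp add: algebra_simps)
  also have "\<dots> = A i j" using p Suc by simp
  finally show ?case .
qed

lemma period:
  assumes "A \<in> Theta_tilde n"
  shows "A (i + k * n) (j + k * n) = A i j"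
proof -
  define m where "m = nat \<bar>k\<bar>"
  have "k = int m \<or> k = - int m" unfolding m_def by arith
  then show ?thesis
  proof
    assume "k = int m"
    then show ?thesis using period_nat[OF assms, of i m j] by simp
  next
    assume m: "k = - int m"
    have "A ((i + k*n) + int m * n) ((j + k*n) + int m * n) = A (i + k*n) (j + k*n)"
      by (rule period_nat[OF assms])
    then show ?thesis using m by simp
  qed
qed

lemma support_bound:
  assumes A: "A \<in> Theta_tilde n" and n: "n > 0"
  shows "\<exists>D\<ge>0. \<forall>s t. A s t \<noteq> 0 \<longrightarrow> \<bar>s - t\<bar> \<le> D"
proof -
  define U where "U = (\<Union>r\<in>{0..<n}. (\<lambda>j. \<bar>j - r\<bar>) ` {j. A r j \<noteq> 0})"
  have fin: "finite U" unfolding U_def using A by (auto simp: Theta_tilde_def)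
  define D where "D = Max (insert 0 U)"
  have "D \<ge> 0" unfolding D_def using fin by simp
  moreover have "\<bar>s - t\<bar> \<le> D" if "A s t \<noteq> 0" for s t
  proof -
    define r where "r = s mod n"
    define k where "k = s div n"
    have s: "s = r + k * n" unfolding r_def k_def by simp
    have "A r (t - k*n) = A (r + k*n) ((t - k*n) + k*n)" using period[OF A] by metis
    also have "\<dots> = A s t" using s by simp
    finally have "A r (t - k*n) \<noteq> 0" using that by simp
    moreover have "r \<in> {0..<n}" unfolding r_def using n by simp
    ultimately have "\<bar>(t - k*n) - r\<bar> \<in> U" unfolding U_def by blast
    moreover have "\<bar>(t - k*n) - r\<bar> = \<bar>s - t\<bar>" using s by simp
    ultimately show ?thesis unfolding D_def using fin by (metis Max_ge finite_insert insertCI)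
  qed
  ultimately show ?thesis by blast
qed

lemma sigma_set_fin_lt:
  fixes B :: zmat and i j D :: int
  assumes hD: "\<forall>s t. B s t \<noteq> 0 \<longrightarrow> \<bar>s - t\<bar> \<le> D"
  shows "finite {(s,t). s \<le> i \<and> j \<le> t \<and> B s t \<noteq> 0}"
proof (rule finite_subset)
  show "{(s,t). s \<le> i \<and> j \<le> t \<and> B s t \<noteq> 0} \<subseteq> {j-D..i} \<times> {j..i+D}"
    using hD by fastforce
qed simp

lemma sigma_set_fin_gt:
  fixes B :: zmat and i j D :: int
  assumes hD: "\<forall>s t. B s t \<noteq> 0 \<longrightarrow> \<bar>s - t\<bar> \<le> D"
  shows "finite {(s,t). i \<le> s \<and> t \<le> j \<and> B s t \<noteq> 0}"
proof (rule finite_subset)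
  show "{(s,t). i \<le> s \<and> t \<le> j \<and> B s t \<noteq> 0} \<subseteq> {i..j+D} \<times> {i-D..j}"
    using hD by fastforce
qed simp

lemma entry_le_sigma:
  assumes B: "B \<in> Theta_tilde n" and hD: "\<forall>s t. B s t \<noteq> 0 \<longrightarrow> \<bar>s - t\<bar> \<le> D"
    and st: "s \<noteq> t"
  shows "B s t \<le> sigma s t B"
proof -
  have nn: "\<And>a b. a \<noteq> b \<Longrightarrow> 0 \<le> B a b" using B by (simp add: Theta_tilde_def)
  show ?thesis
  proof (cases "s < t")
    case True
    let ?S = "{(a,b). a \<le> s \<and> t \<le> b \<and> B a b \<noteq> 0}"
    have fin: "finite ?S" by (rule sigma_set_fin_lt[OF hD])
    have pos: "\<And>x. x \<in> ?S \<Longrightarrow> 0 \<le> (case x of (a,b) \<Rightarrow> B a b)" using nn True by fastforce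
    have "B s t \<le> (\<Sum>(a,b)\<in>?S. B a b)"
    proof (cases "B s t = 0")
      case True then show ?thesis using sum_nonneg[of ?S "\<lambda>x. case x of (a,b) \<Rightarrow> B a b", OF pos] by simp
    next
      case False
      then have "(s,t) \<in> ?S" by simp
      from member_le_sum[OF this _ fin, of "\<lambda>x. case x of (a,b) \<Rightarrow> B a b"] pos
      show ?thesis by auto
    qed
    then show ?thesis using True by (simp add: sigma_def)
  next
    case False
    let ?S = "{(a,b). s \<le> a \<and> b \<le> t \<and> B a b \<noteq> 0}"
    have fin: "finite ?S" by (rule sigma_set_fin_gt[OF hD])
    have pos: "\<And>x. x \<in> ?S \<Longrightarrow> 0 \<le> (case x of (a,b) \<Rightarrow> B a b)" using nn False st by fastforce
    have "B s t \<le> (\<Sum>(a,b)\<in>?S. B a b)"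
    proof (cases "B s t = 0")
      case True then show ?thesis using sum_nonneg[of ?S "\<lambda>x. case x of (a,b) \<Rightarrow> B a b", OF pos] by simp
    next
      case False
      then have "(s,t) \<in> ?S" by simp
      from member_le_sum[OF this _ fin, of "\<lambda>x. case x of (a,b) \<Rightarrow> B a b"] pos
      show ?thesis by auto
    qed
    then show ?thesis using False by (simp add: sigma_def)
  qed
qed

lemma sigma_zero_far:
  assumes hD: "\<forall>s t. A s t \<noteq> 0 \<longrightarrow> \<bar>s - t\<bar> \<le> D" and far: "D < \<bar>s - t\<bar>"
  shows "sigma s t A = 0"
proof (cases "s < t")
  case True
  have e: "{(a,b). a \<le> s \<and> t \<le> b \<and> A a b \<noteq> 0} = {}" using hD far True by fastforce
  show ?thesis unfolding sigma_def by (simp only: True if_True e sum.empty)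
next
  case False
  have e: "{(a,b). s \<le> a \<and> b \<le> t \<and> A a b \<noteq> 0} = {}" using hD far False by fastforce
  show ?thesis unfolding sigma_def by (simp only: False if_False e sum.empty)
qed

lemma bounds:
  assumes A: "A \<in> Theta_tilde n" and n: "n > 0" and hD: "\<forall>s t. A s t \<noteq> 0 \<longrightarrow> \<bar>s - t\<bar> \<le> D"
    and B: "B \<in> Theta_tilde n" and p: "preceq B A" and st: "s \<noteq> t"
  shows "0 \<le> B s t \<and> B s t \<le> sigma s t A \<and> (D < \<bar>s - t\<bar> \<longrightarrow> B s t = 0)"
proof -
  obtain DB where "DB \<ge> 0" and hB: "\<forall>s t. B s t \<noteq> 0 \<longrightarrow> \<bar>s - t\<bar> \<le> DB"
    using support_bound[OF B n] by blast
  have 0: "0 \<le> B s t" using B st by (simp add: Theta_tilde_def)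
  have 1: "B s t \<le> sigma s t A" using entry_le_sigma[OF B hB st] p st by (force simp: preceq_def)
  show ?thesis using 0 1 sigma_zero_far[OF hD] by fastforce
qed

lemma core:
  assumes A: "A \<in> Theta_tilde n" and n: "n > 0"
    and F: "F \<subseteq> {B \<in> Theta_tilde n. preceq B A}"
    and inj: "\<And>B B'. B \<in> F \<Longrightarrow> B' \<in> F \<Longrightarrow> (\<forall>s t. s \<noteq> t \<longrightarrow> B s t = B' s t) \<Longrightarrow> B = B'"
  shows "finite F"
proof -
  obtain D where "D \<ge> 0" and hD: "\<forall>s t. A s t \<noteq> 0 \<longrightarrow> \<bar>s - t\<bar> \<le> D"
    using support_bound[OF A n] by blast
  define K where "K = {(r,t). 0 \<le> r \<and> r < n \<and> -D \<le> t \<and> t \<le> n + D \<and> r \<noteq> t}"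
  have finK: "finite K"
    by (rule finite_subset[of _ "{0..<n} \<times> {-D..n+D}"]) (auto simp: K_def)
  define g where "g B = restrict (\<lambda>p. B (fst p) (snd p)) K" for B :: zmat
  have bd: "\<And>B s t. B \<in> F \<Longrightarrow> s \<noteq> t \<Longrightarrow> 0 \<le> B s t \<and> B s t \<le> sigma s t A \<and> (D < \<bar>s - t\<bar> \<longrightarrow> B s t = 0)"
    using bounds[OF A n hD] F by blast
  have img: "g ` F \<subseteq> PiE K (\<lambda>p. {0..sigma (fst p) (snd p) A})"
  proof (rule image_subsetI)
    fix B assume BF: "B \<in> F"
    show "g B \<in> PiE K (\<lambda>p. {0..sigma (fst p) (snd p) A})"
      unfolding g_def using bd[OF BF] by (auto simp: K_def restrict_PiE_iff)
  qed
  have finP: "finite (PiE K (\<lambda>p. {0..sigma (fst p) (snd p) A}))"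
    using finK by (intro finite_PiE) auto
  have "inj_on g F"
  proof (rule inj_onI)
    fix B B' assume BF: "B \<in> F" and B'F: "B' \<in> F" and eq: "g B = g B'"
    have Bt: "B \<in> Theta_tilde n" "B' \<in> Theta_tilde n" using BF B'F F by auto
    have "B s t = B' s t" if st: "s \<noteq> t" for s t
    proof -
      define r where "r = s mod n"
      define k where "k = s div n"
      define t' where "t' = t - k * n"
      have s: "s = r + k * n" unfolding r_def k_def by simp
      have t: "t = t' + k * n" unfolding t'_def by simp
      have rt: "r \<noteq> t'" using s t st by auto
      have e1: "B s t = B r t'" using period[OF Bt(1)] s t by metis
      have e2: "B' s t = B' r t'" using period[OF Bt(2)] s t by metis
      have r0: "0 \<le> r" "r < n" unfolding r_def using n by auto
      show ?thesis
      proof (cases "(r, t') \<in> K")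
        case True
        then have "g B (r,t') = g B' (r,t')" using eq by simp
        then show ?thesis using True e1 e2 unfolding g_def by simp
      next
        case False
        then have "D < \<bar>r - t'\<bar>" using r0 rt unfolding K_def by auto
        then show ?thesis using bd[OF BF rt] bd[OF B'F rt] e1 e2 by simp
      qed
    qed
    then show "B = B'" using inj[OF BF B'F] by blast
  qed
  then show ?thesis using finite_imageD finite_subset[OF img finP] by blast
qed

theorem lemma7p5:
  fixes n :: int
  assumes "n \<ge> 2"
  shows "(\<forall>A \<in> Theta_pm n. finite {B \<in> Theta_pm n. prec B A})
       \<and> (\<forall>A' \<in> Theta_tilde n. finite {B \<in> Theta_tilde n. sqsubseteq B A'})"
proof
  have n: "n > 0" using assms by simp
  show "\<forall>A \<in> Theta_pm n. finite {B \<in> Theta_pm n. prec B A}"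
  proof
    fix A assume A: "A \<in> Theta_pm n"
    show "finite {B \<in> Theta_pm n. prec B A}"
    proof (rule core)
      show "A \<in> Theta_tilde n" using A by (simp add: Theta_pm_def)
      show "{B \<in> Theta_pm n. prec B A} \<subseteq> {B \<in> Theta_tilde n. preceq B A}"
        by (auto simp: Theta_pm_def prec_def)
      fix B B' assume "B \<in> {B \<in> Theta_pm n. prec B A}" "B' \<in> {B \<in> Theta_pm n. prec B A}"
        and h: "\<forall>s t. s \<noteq> t \<longrightarrow> B s t = B' s t"
      then have d: "\<And>i. B i i = 0" "\<And>i. B' i i = 0" by (auto simp: Theta_pm_def)
      show "B = B'"
      proof (intro ext)
        fix s t show "B s t = B' s t" using h d by (cases "s = t") auto
      qed
    qed (rule n)
  qed
  show "\<forall>A' \<in> Theta_tilde n. finite {B \<in> Theta_tilde n. sqsubseteq B A'}"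
  proof
    fix A assume A: "A \<in> Theta_tilde n"
    obtain D where D0: "D \<ge> 0" and hD: "\<forall>s t. A s t \<noteq> 0 \<longrightarrow> \<bar>s - t\<bar> \<le> D"
      using support_bound[OF A n] by blast
    have roT: "ro B i = (\<Sum>j\<in>{i-D..i+D}. B i j)"
      if B: "B \<in> Theta_tilde n" and p: "preceq B A" for B i
    proof -
      have sub: "{j. B i j \<noteq> 0} \<subseteq> {i-D..i+D}"
      proof
        fix j assume j: "j \<in> {j. B i j \<noteq> 0}"
        show "j \<in> {i-D..i+D}"
        proof (cases "i = j")
          case True then show ?thesis using D0 by simp
        next
          case False
          then have "\<bar>i - j\<bar> \<le> D" using bounds[OF A n hD B p False] j by force
          then show ?thesis by auto
        qed
      qed
      show ?thesis unfolding ro_def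
        by (rule sum.mono_neutral_left) (use sub in auto)
    qed
    show "finite {B \<in> Theta_tilde n. sqsubseteq B A}"
    proof (rule core[OF A n])
      show "{B \<in> Theta_tilde n. sqsubseteq B A} \<subseteq> {B \<in> Theta_tilde n. preceq B A}"
        by (auto simp: sqsubseteq_def)
      fix B B' assume B: "B \<in> {B \<in> Theta_tilde n. sqsubseteq B A}"
        and B': "B' \<in> {B \<in> Theta_tilde n. sqsubseteq B A}"
        and h: "\<forall>s t. s \<noteq> t \<longrightarrow> B s t = B' s t"
      have d: "B i i = B' i i" for i
      proof -
        let ?T = "{i-D..i+D}"
        have iT: "i \<in> ?T" using D0 by simp
        have "ro B i = ro B' i" using B B' by (simp add: sqsubseteq_def)
        moreover have "ro B i = (\<Sum>j\<in>?T. B i j)" using roT[of B i] B by (simp add: sqsubseteq_def)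
        moreover have "ro B' i = (\<Sum>j\<in>?T. B' i j)" using roT[of B' i] B' by (simp add: sqsubseteq_def)
        ultimately have "(\<Sum>j\<in>?T. B i j) = (\<Sum>j\<in>?T. B' i j)" by simp
        moreover have "(\<Sum>j\<in>?T. B i j) = B i i + (\<Sum>j\<in>?T - {i}. B i j)"
          using iT by (simp add: sum.remove)
        moreover have "(\<Sum>j\<in>?T. B' i j) = B' i i + (\<Sum>j\<in>?T - {i}. B' i j)"
          using iT by (simp add: sum.remove)
        moreover have "(\<Sum>j\<in>?T - {i}. B i j) = (\<Sum>j\<in>?T - {i}. B' i j)"
          using h by (intro sum.cong) auto
        ultimately show ?thesis by simp
      qed
      show "B = B'"
      proof (intro ext)
        fix s t show "B s t = B' s t" using h d by (cases "s = t") auto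
      qed
    qed
  qed
qed


end
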